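(* Let $G\in\mathcal G^3_2$ and let $ab\in E(G)$ with $d(a)=d(b)=3$, such that $G-ab=A\cup B$ where $A,B$ are vertex-disjoint subgraphs with $a\in V(A)$, $b\in V(B)$. Let $\grave A$ be the subgraph of $G$ consisting of $A$, the vertex $b$ and the edge $ab$, and assume $v(\grave A)=6$ and $\lambda(\grave A)=2$. Let $z_1,z_2$ be the two neighbours of $b$ in $B$, and for $i=1,2$ let $x_iT_ib$ be a path with $bz_i\in E(T_i)$, with $e(T_i)\in\{2,3\}$, whose internal vertices have degree $2$ in $G$ and whose end $x_i\ne b$ has degree $3$ in $G$ (possibly $x_1=x_2$). Define $G'$ as follows. (a1.1) If $T_i=x_iz_ib$ for $i=1,2$ and $x_1\ne x_2$: $G'=G-(V(A)\cup\{b,z_1,z_2\})$. (a1.2) If $T_i=x_iz_ib$ for $i=1,2$ and $x_1=x_2$: $G'$ is obtained from $G-(V(A)\cup\{b\})$ by adding the edge $z_1z_2$. (a2.1) If $T_1=x_1y_1z_1b$, $T_2=x_2z_2b$ and $x_1\ne x_2$: $G'$ is obtained from $G-(V(A)\cup\{b,z_1,z_2\})$ by adding the edge $y_1x_2$. (a2.2) If $T_1=x_1y_1z_1b$, $T_2=x_2z_2b$ and $x_1=x_2$: $G'$ is obtained from $G-(V(A)\cup\{b,z_1\})$ by adding the edge $y_1z_2$. (a3) If $T_1=x_1y_1z_1b$ and $T_2=x_2y_2z_2b$: $G'$ is obtained from $G-(V(A)\cup\{b,z_1,z_2\})$ by adding the edge $y_1y_2$. Then $G'\in\mathcal G^3_2$,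 and $\lambda(G')\ge v(G')/4$ implies $\lambda(G)\ge v(G)/4$.
   Context: All graphs are finite and simple. For integers $1\le r\le s$, $\mathcal G^s_r$ denotes the set of graphs in which every vertex has degree at least $r$ and at most $s$. $d(x)$ is the degree of $x$ in $G$, $v(\cdot)$ and $e(\cdot)$ the numbers of vertices and edges. $\lambda(G)$ denotes the maximum number of pairwise vertex-disjoint subgraphs of $G$ each of which is a path with exactly two edges. *)

theory Defs
  imports Complex_Main
begin

type_synonym 'a graph = "'a set \<times> 'a set set"

definition verts :: "'a graph \<Rightarrow> 'a set" where "verts G = fst G"
definition edges :: "'a graph \<Rightarrow> 'a set set" where "edges G = snd G"

definition simple_graph :: "'a graph \<Rightarrow> bool" where
  "simple_graph G \<longleftrightarrow> finite (verts G) \<and>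
     (\<forall>e\<in>edges G. \<exists>u v. u \<noteq> v \<and> e = {u, v} \<and> u \<in> verts G \<and> v \<in> verts G)"

definition deg :: "'a graph \<Rightarrow> 'a \<Rightarrow> nat" where
  "deg G x = card {e \<in> edges G. x \<in> e}"

definition nverts :: "'a graph \<Rightarrow> nat" where "nverts G = card (verts G)"

definition Gclass :: "nat \<Rightarrow> nat \<Rightarrow> 'a graph \<Rightarrow> bool" where
  "Gclass r s G \<longleftrightarrow> simple_graph G \<and> (\<forall>x\<in>verts G. r \<le> deg G x \<and> deg G x \<le> s)"

definition induced :: "'a graph \<Rightarrow> 'a set \<Rightarrow> 'a graph" where
  "induced G S = (S \<inter> verts G, {e \<in> edges G. e \<subseteq> S})"

definition del_verts :: "'a graph \<Rightarrow> 'a set \<Rightarrow> 'a graph" where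
  "del_verts G S = induced G (verts G - S)"

definition add_edge :: "'a graph \<Rightarrow> 'a \<Rightarrow> 'a \<Rightarrow> 'a graph" where
  "add_edge G u v = (verts G, insert {u, v} (edges G))"

definition P2s :: "'a graph \<Rightarrow> ('a \<times> 'a \<times> 'a) set" where
  "P2s G = {(u, v, w). u \<noteq> w \<and> {u, v} \<in> edges G \<and> {v, w} \<in> edges G}"

fun tverts :: "'a \<times> 'a \<times> 'a \<Rightarrow> 'a set" where
  "tverts (u, v, w) = {u, v, w}"

definition lam :: "'a graph \<Rightarrow> nat" where
  "lam G = Max (card ` {S. S \<subseteq> P2s G \<and>
      (\<forall>t\<in>S. \<forall>t'\<in>S. t \<noteq> t' \<longrightarrow> tverts t \<inter> tverts t' = {})})"

end

theory Submission
  imports Defs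
begin


definition nb :: "'a graph \<Rightarrow> 'a \<Rightarrow> 'a set" where
  "nb G x = {y. {x, y} \<in> edges G}"

definition packing :: "'a graph \<Rightarrow> ('a \<times> 'a \<times> 'a) set \<Rightarrow> bool" where
  "packing H S \<longleftrightarrow> S \<subseteq> P2s H \<and> (\<forall>t\<in>S. \<forall>t'\<in>S. t \<noteq> t' \<longrightarrow> tverts t \<inter> tverts t' = {})"

lemma lam_alt: "lam H = Max (card ` {S. packing H S})"
  by (simp add: lam_def packing_def)

lemma nb_sym: "y \<in> nb G x \<longleftrightarrow> x \<in> nb G y"
  by (simp add: nb_def insert_commute)

lemma nb_verts: "simple_graph G \<Longrightarrow> nb G x \<subseteq> verts G"
  unfolding simple_graph_def nb_def by (force simp: doubleton_eq_iff)

lemma nb_irrefl: "simple_graph G \<Longrightarrow> x \<notin> nb G x"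
  unfolding simple_graph_def nb_def by force

lemma nb_vert: "simple_graph G \<Longrightarrow> y \<in> nb G x \<Longrightarrow> x \<in> verts G"
  unfolding simple_graph_def nb_def by (force simp: doubleton_eq_iff)

lemma deg_nb:
  assumes "simple_graph G" shows "deg G x = card (nb G x)"
proof -
  have "bij_betw (\<lambda>y. {x, y}) (nb G x) {e \<in> edges G. x \<in> e}"
  proof (rule bij_betwI')
    fix y y' assume "y \<in> nb G x" "y' \<in> nb G x"
    then show "({x, y} = {x, y'}) = (y = y')" by (auto simp: doubleton_eq_iff)
  next
    fix y assume "y \<in> nb G x" then show "{x, y} \<in> {e \<in> edges G. x \<in> e}" by (simp add: nb_def)
  next
    fix e assume "e \<in> {e \<in> edges G. x \<in> e}"
    then obtain u v where "u \<noteq> v" "e = {u, v}" "e \<in> edges G" "x \<in> e"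
      using assms unfolding simple_graph_def by blast
    then show "\<exists>y\<in>nb G x. e = {x, y}" unfolding nb_def
      by (auto simp: insert_commute)
  qed
  then show ?thesis unfolding deg_def by (simp add: bij_betw_same_card)
qed

lemma finite_nb: "simple_graph G \<Longrightarrow> finite (nb G x)"
  using nb_verts simple_graph_def finite_subset by metis

lemma card2_eq: "finite N \<Longrightarrow> card N = 2 \<Longrightarrow> p \<in> N \<Longrightarrow> q \<in> N \<Longrightarrow> p \<noteq> q \<Longrightarrow> N = {p, q}"
  by (metis card_2_iff doubleton_eq_iff insertE singletonD)

lemma card3_eq: "finite N \<Longrightarrow> card N = 3 \<Longrightarrow> p \<in> N \<Longrightarrow> q \<in> N \<Longrightarrow> r \<in> N \<Longrightarrow> p \<noteq> q \<Longrightarrow> p \<noteq> r \<Longrightarrow> q \<noteq> r \<Longrightarrow> N = {p, q, r}"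
proof -
  assume a: "finite N" "card N = 3" "p \<in> N" "q \<in> N" "r \<in> N" "p \<noteq> q" "p \<noteq> r" "q \<noteq> r"
  have "{p,q,r} \<subseteq> N" "card {p,q,r} = 3" using a by auto
  then show ?thesis using a card_subset_eq by metis
qed

lemma verts_del: "verts (del_verts G R) = verts G - R"
  by (auto simp: del_verts_def induced_def verts_def)
lemma edges_del: "edges (del_verts G R) = {e \<in> edges G. e \<subseteq> verts G - R}"
  by (auto simp: del_verts_def induced_def edges_def verts_def)
lemma verts_add: "verts (add_edge G u v) = verts G"
  by (simp add: add_edge_def verts_def)
lemma edges_add: "edges (add_edge G u v) = insert {u,v} (edges G)"
  by (simp add: add_edge_def edges_def)

lemma simple_del: "simple_graph G \<Longrightarrow> simple_graph (del_verts G R)"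
proof -
  assume s: "simple_graph G"
  show ?thesis unfolding simple_graph_def verts_del edges_del
  proof (intro conjI ballI)
    show "finite (verts G - R)" using s unfolding simple_graph_def by auto
  next
    fix e assume e: "e \<in> {e \<in> edges G. e \<subseteq> verts G - R}"
    then obtain u v where "u \<noteq> v" "e = {u,v}" using s unfolding simple_graph_def by blast
    then show "\<exists>u v. u \<noteq> v \<and> e = {u, v} \<and> u \<in> verts G - R \<and> v \<in> verts G - R" using e by auto
  qed
qed

lemma simple_add: "simple_graph G \<Longrightarrow> u \<noteq> v \<Longrightarrow> u \<in> verts G \<Longrightarrow> v \<in> verts G \<Longrightarrow> simple_graph (add_edge G u v)"
  unfolding simple_graph_def verts_add edges_add by (simp only: ball_simps) blast

lemma nb_del: "simple_graph G \<Longrightarrow> x \<in> verts G \<Longrightarrow> x \<notin> R \<Longrightarrow> nb (del_verts G R) x = nb G x - R"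
  using nb_verts[of G x] unfolding nb_def edges_del by auto

lemma nb_add: "nb (add_edge G u v) x = nb G x \<union> (if x = u then {v} else {}) \<union> (if x = v then {u} else {})"
  unfolding nb_def edges_add by (auto simp: doubleton_eq_iff)

lemma P2s_verts: "simple_graph H \<Longrightarrow> t \<in> P2s H \<Longrightarrow> tverts t \<subseteq> verts H"
  unfolding P2s_def simple_graph_def by (force simp: doubleton_eq_iff)

lemma P2s_finite: "simple_graph H \<Longrightarrow> finite (P2s H)"
proof -
  assume s: "simple_graph H"
  have "P2s H \<subseteq> verts H \<times> verts H \<times> verts H"
  proof
    fix t assume "t \<in> P2s H" then show "t \<in> verts H \<times> verts H \<times> verts H"
      using P2s_verts[OF s, of t] by (cases t) auto
  qed
  moreover have "finite (verts H)" using s simple_graph_def by blast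
  ultimately show ?thesis using finite_subset by blast
qed

lemma packings_finite: "simple_graph H \<Longrightarrow> finite {S. packing H S}"
proof -
  assume s: "simple_graph H"
  have "{S. packing H S} \<subseteq> Pow (P2s H)" unfolding packing_def by auto
  then show ?thesis using P2s_finite[OF s] finite_subset by blast
qed

lemma lam_ge: "simple_graph H \<Longrightarrow> packing H S \<Longrightarrow> card S \<le> lam H"
  unfolding lam_alt using packings_finite[of H] by (intro Max_ge) auto

lemma lam_ex: "simple_graph H \<Longrightarrow> \<exists>S. packing H S \<and> card S = lam H"
proof -
  assume s: "simple_graph H"
  have "packing H {}" by (simp add: packing_def)
  then have "lam H \<in> card ` {S. packing H S}" unfolding lam_alt
    using packings_finite[OF s] by (intro Max_in) auto
  then show ?thesis by auto
qed

lemma tverts_ne: "tverts t \<noteq> {}" by (cases t) auto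

definition repl :: "'a graph \<Rightarrow> 'a graph \<Rightarrow> 'a set \<Rightarrow> bool" where
  "repl G G' Z \<longleftrightarrow> (\<forall>t\<in>P2s G' - P2s G. \<exists>t'\<in>P2s G. tverts t' \<subseteq> tverts t \<union> Z)"

lemma lift:
  assumes s': "simple_graph G'"
    and newc: "\<forall>t\<in>P2s G' - P2s G. u \<in> tverts t"
    and W: "verts G' \<inter> W = {}" and Z: "Z \<inter> (verts G' \<union> W) = {}"
    and rp: "repl G G' Z"
    and pk: "packing G' S'"
  shows "\<exists>S. packing G S \<and> card S = card S' \<and> (\<forall>t\<in>S. tverts t \<inter> W = {})"
proof (cases "S' \<subseteq> P2s G")
  case True
  have "\<forall>t\<in>S'. tverts t \<inter> W = {}" using pk W P2s_verts[OF s'] unfolding packing_def by blast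
  then show ?thesis using True pk unfolding packing_def by blast
next
  case False
  then obtain t0 where t0: "t0 \<in> S'" "t0 \<notin> P2s G" by blast
  have t0G': "t0 \<in> P2s G'" using t0 pk unfolding packing_def by blast
  then obtain t1 where t1: "t1 \<in> P2s G" "tverts t1 \<subseteq> tverts t0 \<union> Z" using rp t0 unfolding repl_def by blast
  have uniq: "t = t0" if "t \<in> S'" "t \<notin> P2s G" for t
  proof (rule ccontr)
    assume "t \<noteq> t0"
    moreover have "u \<in> tverts t" "u \<in> tverts t0" using newc that t0 t0G' pk unfolding packing_def by blast+
    ultimately show False using pk that t0 unfolding packing_def by blast
  qed
  have vS: "tverts t \<subseteq> verts G'" if "t \<in> S'" for t using that pk P2s_verts[OF s'] unfolding packing_def by blast
  define S where "S = insert t1 (S' - {t0})"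
  have t1n: "t1 \<notin> S' - {t0}"
  proof
    assume a: "t1 \<in> S' - {t0}"
    then have "tverts t1 \<inter> tverts t0 = {}" using pk t0 unfolding packing_def by blast
    moreover have "tverts t1 \<subseteq> verts G'" using vS a by blast
    ultimately have "tverts t1 = {}" using t1 Z by blast
    then show False using tverts_ne by blast
  qed
  have fin: "finite S'"
    using pk P2s_finite[OF s'] finite_subset unfolding packing_def by blast
  have "card S = card S'" unfolding S_def using t1n t0 fin
    by (simp add: card_insert_if) (metis One_nat_def Suc_pred card_gt_0_iff equals0D)
  moreover have "packing G S"
  proof -
    have "S' - {t0} \<subseteq> P2s G" using uniq pk unfolding packing_def by blast
    moreover have "tverts t1 \<inter> tverts t = {}" if "t \<in> S' - {t0}" for t
    proof -
      have "tverts t \<inter> tverts t0 = {}" using that pk t0 unfolding packing_def by blast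
      moreover have "tverts t \<inter> Z = {}" using vS that Z by blast
      ultimately show ?thesis using t1 by blast
    qed
    ultimately show ?thesis using t1 pk unfolding S_def packing_def by (auto simp: Int_commute)
  qed
  moreover have "\<forall>t\<in>S. tverts t \<inter> W = {}"
    using vS W t1 Z t0 unfolding S_def by blast
  ultimately show ?thesis by blast
qed



lemma repl_swap:
  assumes s': "simple_graph G'" and E: "edges G' \<subseteq> insert {u,v} (edges G)"
    and eu: "{zu,u} \<in> edges G" and ev: "{zv,v} \<in> edges G"
    and nu: "zu \<notin> verts G'" and nv: "zv \<notin> verts G'"
  shows "repl G G' {zu,zv} \<and> (\<forall>t\<in>P2s G' - P2s G. u \<in> tverts t)"
proof -
  have main: "(\<exists>t'\<in>P2s G. tverts t' \<subseteq> tverts t \<union> {zu,zv}) \<and> u \<in> tverts t"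
    if t: "t \<in> P2s G'" "t \<notin> P2s G" for t
  proof -
    obtain p q r where tt: "t = (p,q,r)" by (cases t)
    have vv: "p \<in> verts G'" "q \<in> verts G'" "r \<in> verts G'" using P2s_verts[OF s' t(1)] tt by auto
    have pr: "p \<noteq> r" "{p,q} \<in> edges G'" "{q,r} \<in> edges G'" using t tt by (auto simp: P2s_def)
    have zz: "zu \<noteq> p" "zu \<noteq> r" "zv \<noteq> p" "zv \<noteq> r" using vv nu nv by auto
    have o1: "{p,q} \<in> edges G \<or> {p,q} = {u,v}" "{q,r} \<in> edges G \<or> {q,r} = {u,v}" using pr E by auto
    have o2: "\<not> ({p,q} = {u,v} \<and> {q,r} = {u,v})" using pr(1) by (auto simp: doubleton_eq_iff)
    have o3: "{p,q} \<notin> edges G \<or> {q,r} \<notin> edges G" using t tt pr by (auto simp: P2s_def)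
    consider "{p,q} = {u,v}" "{q,r} \<in> edges G" | "{q,r} = {u,v}" "{p,q} \<in> edges G"
      using o1 o2 o3 by blast
    then show ?thesis
    proof cases
      case 1
      then consider "q = u" "p = v" | "q = v" "p = u" by (auto simp: doubleton_eq_iff)
      then show ?thesis
      proof cases
        case 1
        then have "(zu,u,r) \<in> P2s G" using zz eu \<open>{q,r} \<in> edges G\<close> by (auto simp: P2s_def insert_commute)
        then show ?thesis using tt 1 by force
      next
        case 2
        then have "(zv,v,r) \<in> P2s G" using zz ev \<open>{q,r} \<in> edges G\<close> by (auto simp: P2s_def insert_commute)
        then show ?thesis using tt 2 by force
      qed
    next
      case 2
      then consider "q = u" "r = v" | "q = v" "r = u" by (auto simp: doubleton_eq_iff)
      then show ?thesis
      proof cases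
        case 1
        then have "(p,u,zu) \<in> P2s G" using zz eu \<open>{p,q} \<in> edges G\<close> by (auto simp: P2s_def insert_commute)
        then show ?thesis using tt 1 by force
      next
        case 2
        then have "(p,v,zv) \<in> P2s G" using zz ev \<open>{p,q} \<in> edges G\<close> by (auto simp: P2s_def insert_commute)
        then show ?thesis using tt 2 by force
      qed
    qed
  qed
  then show ?thesis unfolding repl_def by blast
qed

lemma repl_tri:
  assumes E: "edges G' \<subseteq> insert {u,v} (edges G)"
    and nu: "nb G' u = {v,x}" and nv: "nb G' v = {u,x}"
    and eu: "{u,x} \<in> edges G" and ev: "{x,v} \<in> edges G" and uv: "u \<noteq> v"
  shows "repl G G' {} \<and> (\<forall>t\<in>P2s G' - P2s G. u \<in> tverts t)"
proof -
  have t': "(u,x,v) \<in> P2s G" using eu ev uv by (simp add: P2s_def)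
  have main: "{u,x,v} \<subseteq> tverts t \<and> u \<in> tverts t"
    if t: "t \<in> P2s G'" "t \<notin> P2s G" for t
  proof -
    obtain p q r where tt: "t = (p,q,r)" by (cases t)
    have pr: "p \<noteq> r" "{p,q} \<in> edges G'" "{q,r} \<in> edges G'" using t tt by (auto simp: P2s_def)
    consider "{p,q} = {u,v}" | "{q,r} = {u,v}"
      using pr E t tt by (auto simp: P2s_def)
    then show ?thesis
    proof cases
      case 1
      then consider "q = u" "p = v" | "q = v" "p = u" by (auto simp: doubleton_eq_iff)
      then show ?thesis
      proof cases
        case 1
        then have "r \<in> nb G' u" using pr by (simp add: nb_def)
        then show ?thesis using nu tt 1 pr by auto
      next
        case 2
        then have "r \<in> nb G' v" using pr by (simp add: nb_def)
        then show ?thesis using nv tt 2 pr by auto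
      qed
    next
      case 2
      then consider "q = u" "r = v" | "q = v" "r = u" by (auto simp: doubleton_eq_iff)
      then show ?thesis
      proof cases
        case 1
        then have "p \<in> nb G' u" using pr by (simp add: nb_def insert_commute)
        then show ?thesis using nu tt 1 pr by auto
      next
        case 2
        then have "p \<in> nb G' v" using pr by (simp add: nb_def insert_commute)
        then show ?thesis using nv tt 2 pr by auto
      qed
    qed
  qed
  have "tverts (u,x,v) = {u,x,v}" by simp
  then show ?thesis unfolding repl_def using main t' by (metis Un_empty_right DiffE)
qed

lemma repl_none:
  assumes E: "edges G' \<subseteq> edges G"
  shows "repl G G' {} \<and> (\<forall>t\<in>P2s G' - P2s G. u \<in> tverts t)"
proof -
  have "P2s G' \<subseteq> P2s G" using E unfolding P2s_def by auto
  then show ?thesis unfolding repl_def by blast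
qed

lemma simple_induced: "simple_graph G \<Longrightarrow> simple_graph (induced G W)"
  unfolding simple_graph_def induced_def verts_def edges_def by (auto 0 4)

lemma P2s_induced: "t \<in> P2s (induced G W) \<Longrightarrow> t \<in> P2s G \<and> tverts t \<subseteq> W"
  unfolding P2s_def induced_def edges_def by auto

lemma final:
  assumes sG: "simple_graph G" and sG': "simple_graph G'" and WG: "W \<subseteq> verts G"
    and cW: "card W = 6" and v1: "verts G' \<subseteq> verts G - W"
    and v2: "verts G - (W \<union> {z1,z2}) \<subseteq> verts G'"
    and lamA: "lam (induced G W) = 2"
    and lift: "\<And>S'. packing G' S' \<Longrightarrow> \<exists>S. packing G S \<and> card S = card S' \<and> (\<forall>t\<in>S. tverts t \<inter> W = {})"
  shows "real (lam G') \<ge> real (nverts G') / 4 \<longrightarrow> real (lam G) \<ge> real (nverts G) / 4"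
proof -
  obtain S' where S': "packing G' S'" "card S' = lam G'" using lam_ex[OF sG'] by blast
  obtain S where S: "packing G S" "card S = lam G'" "\<forall>t\<in>S. tverts t \<inter> W = {}" using lift[OF S'(1)] S' by auto
  obtain SA where SA: "packing (induced G W) SA" "card SA = 2" using lam_ex[OF simple_induced[OF sG], of W] lamA by auto
  have SAG1: "SA \<subseteq> P2s G" using SA(1) P2s_induced unfolding packing_def by blast
  have SAG2: "tverts t \<subseteq> W" if "t \<in> SA" for t
    using SA(1) P2s_induced that unfolding packing_def by blast
  have disj: "tverts t \<inter> tverts t' = {}" if "t \<in> S" "t' \<in> SA" for t t'
  proof -
    have "tverts t \<inter> W = {}" using S(3) that(1) by blast
    then show ?thesis using SAG2[OF that(2)] by blast
  qed
  have nin: "t \<notin> SA" if "t \<in> S" for t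
  proof
    assume a: "t \<in> SA"
    have "tverts t = {}" using disj[OF that a] by simp
    then show False using tverts_ne by blast
  qed
  have dj: "S \<inter> SA = {}" using nin by blast
  have pw: "tverts t \<inter> tverts t' = {}" if tt: "t \<in> S \<union> SA" "t' \<in> S \<union> SA" "t \<noteq> t'" for t t'
  proof -
    consider "t \<in> S" "t' \<in> S" | "t \<in> S" "t' \<in> SA" | "t \<in> SA" "t' \<in> S" | "t \<in> SA" "t' \<in> SA"
      using tt(1,2) by blast
    then show ?thesis
    proof cases
      case 1 then show ?thesis using S(1) tt(3) unfolding packing_def by blast
    next
      case 2 then show ?thesis using disj by blast
    next
      case 3 then show ?thesis using disj[of t' t] by (simp add: Int_commute)
    next
      case 4 then show ?thesis using SA(1) tt(3) unfolding packing_def by blast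
    qed
  qed
  have pk: "packing G (S \<union> SA)" unfolding packing_def
  proof (intro conjI)
    show "S \<union> SA \<subseteq> P2s G" using S(1) SAG1 unfolding packing_def by blast
    show "\<forall>t\<in>S \<union> SA. \<forall>t'\<in>S \<union> SA. t \<noteq> t' \<longrightarrow> tverts t \<inter> tverts t' = {}"
      using pw by blast
  qed
  have finS: "finite S" using S(1) P2s_finite[OF sG] finite_subset unfolding packing_def by blast
  have finSA: "finite SA" using SAG1 P2s_finite[OF sG] finite_subset by blast
  have "card (S \<union> SA) = lam G' + 2"
    using card_Un_disjoint[OF finS finSA dj] S(2) SA(2) by simp
  then have L: "lam G' + 2 \<le> lam G" using lam_ge[OF sG pk] by simp
  have finG: "finite (verts G)" using sG unfolding simple_graph_def by blast
  have finG': "finite (verts G')" using sG' unfolding simple_graph_def by blast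
  have c2: "card {z1,z2} \<le> 2" by (cases "z1 = z2") auto
  have "card (W \<union> {z1,z2}) \<le> 8"
    using card_Un_le[of W "{z1,z2}"] cW c2 by linarith
  moreover have "card (verts G) - card (W \<union> {z1,z2}) \<le> card (verts G - (W \<union> {z1,z2}))"
    by (rule diff_card_le_card_Diff) (use WG finG finite_subset in auto)
  moreover have "card (verts G - (W \<union> {z1,z2})) \<le> card (verts G')"
    using card_mono[OF finG' v2] .
  ultimately have "nverts G \<le> nverts G' + 8" unfolding nverts_def by linarith
  then show ?thesis using L by simp
qed

lemma gclass_from:
  "simple_graph G' \<Longrightarrow> (\<And>w. w \<in> verts G' \<Longrightarrow> 2 \<le> card (nb G' w) \<and> card (nb G' w) \<le> 3) \<Longrightarrow> Gclass 2 3 G'"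
  unfolding Gclass_def using deg_nb by metis



locale L =
  fixes G :: "'a graph" and VA VB :: "'a set" and a b z1 z2 :: 'a
  assumes G: "Gclass 2 3 G"
    and ab: "{a, b} \<in> edges G" and da: "deg G a = 3" and db: "deg G b = 3"
    and part: "verts G = VA \<union> VB" "VA \<inter> VB = {}" "a \<in> VA" "b \<in> VB"
    and cross: "\<forall>e\<in>edges G - {{a, b}}. e \<subseteq> VA \<or> e \<subseteq> VB"
    and vA: "nverts (induced G (VA \<union> {b})) = 6"
    and lA: "lam (induced G (VA \<union> {b})) = 2"
    and nbs: "z1 \<in> VB" "z2 \<in> VB" "z1 \<noteq> z2" "{b, z1} \<in> edges G" "{b, z2} \<in> edges G"
begin

lemma sG: "simple_graph G" using G Gclass_def by blast

lemma finN: "finite (nb G w)" using finite_nb[OF sG] .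

lemma dG: "deg G w = card (nb G w)" using deg_nb[OF sG] .

lemma cardN: "w \<in> verts G \<Longrightarrow> 2 \<le> card (nb G w) \<and> card (nb G w) \<le> 3"
  using G dG unfolding Gclass_def by metis

lemma ednb: "{x,y} \<in> edges G \<Longrightarrow> y \<in> nb G x \<and> x \<in> nb G y"
  by (simp add: nb_def insert_commute)

lemma inVB: "w \<in> VB \<Longrightarrow> w \<noteq> b \<Longrightarrow> y \<in> nb G w \<Longrightarrow> y \<in> VB"
proof -
  assume w: "w \<in> VB" "w \<noteq> b" "y \<in> nb G w"
  have e: "{w,y} \<in> edges G" using w(3) nb_def by fastforce
  have "w \<noteq> a" using w part by blast
  then have "{w,y} \<noteq> {a,b}" using w(2) by (auto simp: doubleton_eq_iff)
  then have "{w,y} \<subseteq> VA \<or> {w,y} \<subseteq> VB" using cross e by blast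
  then show ?thesis using w part by blast
qed

lemma deg2: "deg G v = 2 \<Longrightarrow> p \<in> nb G v \<Longrightarrow> q \<in> nb G v \<Longrightarrow> p \<noteq> q \<Longrightarrow> nb G v = {p,q}"
  using card2_eq finN dG by metis

lemma nbb: "nb G b = {a,z1,z2}"
proof -
  have "a \<in> nb G b" "z1 \<in> nb G b" "z2 \<in> nb G b" using ab nbs ednb by blast+
  moreover have "a \<noteq> z1" "a \<noteq> z2" using part nbs by blast+
  ultimately show ?thesis using card3_eq[OF finN] db dG nbs by metis
qed

lemma VAG: "VA \<subseteq> verts G" using part by blast

lemma vertsVB: "w \<in> VB \<Longrightarrow> w \<in> verts G" using part by blast

lemma finish:
  assumes s': "simple_graph G'" and v1: "verts G' \<subseteq> verts G - (VA \<union> {b})"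
    and v2: "verts G - (VA \<union> {b} \<union> {z1,z2}) \<subseteq> verts G'"
    and rp: "repl G G' Z" and nc: "\<forall>t\<in>P2s G' - P2s G. u \<in> tverts t"
    and Z: "Z \<inter> (verts G' \<union> (VA \<union> {b})) = {}"
  shows "real (lam G') \<ge> real (nverts G') / 4 \<longrightarrow> real (lam G) \<ge> real (nverts G) / 4"
proof (rule final[OF sG s', of "VA \<union> {b}" z1 z2])
  show "VA \<union> {b} \<subseteq> verts G" using part by blast
  show "card (VA \<union> {b}) = 6" using vA part unfolding nverts_def induced_def verts_def
    by (metis Int_absorb2 \<open>VA \<union> {b} \<subseteq> verts G\<close> fst_conv verts_def)
  show "verts G' \<subseteq> verts G - (VA \<union> {b})" by fact
  show "verts G - (VA \<union> {b} \<union> {z1, z2}) \<subseteq> verts G'" by fact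
  show "lam (induced G (VA \<union> {b})) = 2" by (rule lA)
  fix S' assume "packing G' S'"
  then show "\<exists>S. packing G S \<and> card S = card S' \<and> (\<forall>t\<in>S. tverts t \<inter> (VA \<union> {b}) = {})"
    using lift[OF s' nc _ Z rp] v1 by blast
qed

lemma bnb: "b \<in> nb G w \<longleftrightarrow> w \<in> {a,z1,z2}"
  using nbb nb_sym[of b G w] by simp

lemma wfacts: "w \<in> verts G \<Longrightarrow> w \<notin> VA \<Longrightarrow> w \<noteq> b \<Longrightarrow> w \<in> VB \<and> w \<noteq> a \<and> (\<forall>y\<in>nb G w. y \<notin> VA)"
  using inVB part by blast


lemma a11:
  assumes "distinct [x1, z1, b]" "{x1, z1} \<in> edges G" "deg G z1 = 2" "deg G x1 = 3"
    "distinct [x2, z2, b]" "{x2, z2} \<in> edges G" "deg G z2 = 2" "deg G x2 = 3"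
    "x1 \<noteq> x2" and G': "G' = del_verts G (VA \<union> {b, z1, z2})"
  shows "Gclass 2 3 G' \<and>
         (real (lam G') \<ge> real (nverts G') / 4 \<longrightarrow> real (lam G) \<ge> real (nverts G) / 4)"
proof -
  define R where "R = VA \<union> {b, z1, z2}"
  have "b \<in> nb G z1" "x1 \<in> nb G z1" using ednb nbs assms(2) by blast+
  then have nz1: "nb G z1 = {b,x1}" using deg2[of z1 b x1] assms(1,3) by auto
  have "b \<in> nb G z2" "x2 \<in> nb G z2" using ednb nbs assms(6) by blast+
  then have nz2: "nb G z2 = {b,x2}" using deg2[of z2 b x2] assms(5,7) by auto
  have x1: "x1 \<in> VB" "x1 \<notin> R" using inVB[of z1 x1] nz1 nbs assms part unfolding R_def by auto
  have x2: "x2 \<in> VB" "x2 \<notin> R" using inVB[of z2 x2] nz2 nbs assms part unfolding R_def by auto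
  have vG': "verts G' = verts G - R" unfolding G' R_def verts_del ..
  have s': "simple_graph G'" unfolding G' by (rule simple_del[OF sG])
  have "2 \<le> card (nb G' w) \<and> card (nb G' w) \<le> 3" if w: "w \<in> verts G'" for w
  proof -
    have wv: "w \<in> VB" "w \<noteq> b" "w \<noteq> z1" "w \<noteq> z2" "w \<in> verts G" "w \<notin> VA" "w \<noteq> a"
      using w vG' part unfolding R_def by auto
    have e1: "nb G' w = nb G w - R" using nb_del[OF sG] wv vG' unfolding G' R_def by auto
    have nVA: "y \<notin> VA" if "y \<in> nb G w" for y using inVB[OF wv(1,2) that] part by blast
    have nb: "b \<notin> nb G w" using nbb wv nb_sym[of b G w] by auto
    have e2: "nb G' w = nb G w - {z1,z2}" using e1 nVA nb unfolding R_def by auto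
    consider "w = x1" | "w = x2" | "w \<noteq> x1" "w \<noteq> x2" by blast
    then show ?thesis
    proof cases
      case 1
      have "z1 \<in> nb G x1" "z2 \<notin> nb G x1" using nz1 nz2 nb_sym[of z1 G x1] nb_sym[of z2 G x1] assms by auto
      then have "nb G' w = nb G x1 - {z1}" using e2 1 by auto
      then show ?thesis using 1 assms dG finN \<open>z1 \<in> nb G x1\<close> by (simp add: card_Diff_singleton)
    next
      case 2
      have "z2 \<in> nb G x2" "z1 \<notin> nb G x2" using nz1 nz2 nb_sym[of z1 G x2] nb_sym[of z2 G x2] assms by auto
      then have "nb G' w = nb G x2 - {z2}" using e2 2 by auto
      then show ?thesis using 2 assms dG finN \<open>z2 \<in> nb G x2\<close> by (simp add: card_Diff_singleton)
    next
      case 3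
      have "z1 \<notin> nb G w" "z2 \<notin> nb G w" using nz1 nz2 nb_sym[of z1 G w] nb_sym[of z2 G w] 3 wv by auto
      then have "nb G' w = nb G w" using e2 by auto
      then show ?thesis using cardN wv by simp
    qed
  qed
  then have "Gclass 2 3 G'" using gclass_from s' by blast
  moreover have "real (lam G') \<ge> real (nverts G') / 4 \<longrightarrow> real (lam G) \<ge> real (nverts G) / 4"
  proof (rule finish[OF s'])
    show "verts G' \<subseteq> verts G - (VA \<union> {b})" "verts G - (VA \<union> {b} \<union> {z1, z2}) \<subseteq> verts G'"
      using vG' unfolding R_def by auto
    have "edges G' \<subseteq> edges G" unfolding G' edges_del by auto
    then have rr: "repl G G' {} \<and> (\<forall>t\<in>P2s G' - P2s G. b \<in> tverts t)" by (rule repl_none)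
    then show "repl G G' {}" by (rule conjunct1)
    from rr show "\<forall>t\<in>P2s G' - P2s G. b \<in> tverts t" by (rule conjunct2)
    show "{} \<inter> (verts G' \<union> (VA \<union> {b})) = {}" by simp
  qed
  ultimately show ?thesis by blast
qed



lemma a12:
  assumes "distinct [x1, z1, b]" "{x1, z1} \<in> edges G" "deg G z1 = 2" "deg G x1 = 3"
    "distinct [x2, z2, b]" "{x2, z2} \<in> edges G" "deg G z2 = 2" "deg G x2 = 3"
    "x1 = x2" and G': "G' = add_edge (del_verts G (VA \<union> {b})) z1 z2"
  shows "Gclass 2 3 G' \<and>
         (real (lam G') \<ge> real (nverts G') / 4 \<longrightarrow> real (lam G) \<ge> real (nverts G) / 4)"
proof -
  define R where "R = VA \<union> {b}"
  define H where "H = del_verts G R"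
  have "b \<in> nb G z1" "x1 \<in> nb G z1" using ednb nbs assms(2) by blast+
  then have nz1: "nb G z1 = {b,x1}" using deg2[of z1 b x1] assms(1,3) by auto
  have "b \<in> nb G z2" "x1 \<in> nb G z2" using ednb nbs assms(6,9) by blast+
  then have nz2: "nb G z2 = {b,x1}" using deg2[of z2 b x1] assms(5,7,9) by auto
  have x1: "x1 \<in> VB" "x1 \<notin> R" using inVB[of z1 x1] nz1 nbs assms part unfolding R_def by auto
  have zR: "z1 \<notin> R" "z2 \<notin> R" "z1 \<in> verts G" "z2 \<in> verts G" using nbs assms part unfolding R_def by auto
  have x1z2: "x1 \<noteq> z2" using assms by auto
  have G'H: "G' = add_edge H z1 z2" unfolding G' H_def R_def ..
  have vH: "verts H = verts G - R" unfolding H_def verts_del ..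
  have sH: "simple_graph H" unfolding H_def by (rule simple_del[OF sG])
  have s': "simple_graph G'" unfolding G'H
    by (rule simple_add[OF sH nbs(3)]) (use zR vH in auto)
  have vG': "verts G' = verts G - R" unfolding G'H verts_add vH ..
  have nG': "nb G' w = (nb G w - {b}) \<union> (if w = z1 then {z2} else {}) \<union> (if w = z2 then {z1} else {})"
    if w: "w \<in> verts G'" for w
  proof -
    have wv: "w \<in> verts G" "w \<notin> VA" "w \<noteq> b" using w vG' unfolding R_def by auto
    have nVA: "\<forall>y\<in>nb G w. y \<notin> VA" using wfacts[OF wv] by blast
    have "nb H w = nb G w - R" unfolding H_def using nb_del[OF sG] wv unfolding R_def by auto
    also have "\<dots> = nb G w - {b}" using nVA unfolding R_def by auto
    finally show ?thesis unfolding G'H nb_add by simp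
  qed
  have n1: "nb G' z1 = {x1, z2}" using nG'[of z1] zR vG' nz1 nbs assms by auto
  have n2: "nb G' z2 = {x1, z1}" using nG'[of z2] zR vG' nz2 nbs assms by auto
  have "2 \<le> card (nb G' w) \<and> card (nb G' w) \<le> 3" if w: "w \<in> verts G'" for w
  proof -
    have wv: "w \<in> verts G" "w \<notin> VA" "w \<noteq> b" using w vG' unfolding R_def by auto
    have wa: "w \<noteq> a" using wfacts[OF wv] by blast
    consider "w = z1" | "w = z2" | "w \<noteq> z1" "w \<noteq> z2" by blast
    then show ?thesis
    proof cases
      case 1 then show ?thesis using n1 x1z2 by simp
    next
      case 2 then show ?thesis using n2 assms(1) by auto
    next
      case 3
      then have "b \<notin> nb G w" using bnb wa by simp
      then have "nb G' w = nb G w" using nG'[OF w] 3 by auto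
      then show ?thesis using cardN wv by simp
    qed
  qed
  then have "Gclass 2 3 G'" using gclass_from s' by blast
  moreover have "real (lam G') \<ge> real (nverts G') / 4 \<longrightarrow> real (lam G) \<ge> real (nverts G) / 4"
  proof (rule finish[OF s'])
    show "verts G' \<subseteq> verts G - (VA \<union> {b})" "verts G - (VA \<union> {b} \<union> {z1, z2}) \<subseteq> verts G'"
      using vG' unfolding R_def by auto
    have E: "edges G' \<subseteq> insert {z1,z2} (edges G)" unfolding G' edges_add edges_del by auto
    have rr: "repl G G' {} \<and> (\<forall>t\<in>P2s G' - P2s G. z1 \<in> tverts t)"
    proof (rule repl_tri[OF E])
      show "nb G' z1 = {z2, x1}" using n1 by auto
      show "nb G' z2 = {z1, x1}" using n2 by auto
      show "{z1, x1} \<in> edges G" using assms(2) by (simp add: insert_commute)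
      show "{x1, z2} \<in> edges G" using assms(6,9) by simp
      show "z1 \<noteq> z2" by (rule nbs(3))
    qed
    then show "repl G G' {}" by (rule conjunct1)
    from rr show "\<forall>t\<in>P2s G' - P2s G. z1 \<in> tverts t" by (rule conjunct2)
    show "{} \<inter> (verts G' \<union> (VA \<union> {b})) = {}" by simp
  qed
  ultimately show ?thesis by blast
qed



lemma a21:
  assumes "distinct [x1, y1, z1, b]" "{x1, y1} \<in> edges G" "{y1, z1} \<in> edges G"
    "deg G z1 = 2" "deg G y1 = 2" "deg G x1 = 3"
    "distinct [x2, z2, b]" "{x2, z2} \<in> edges G" "deg G z2 = 2" "deg G x2 = 3"
    "x1 \<noteq> x2" and G': "G' = add_edge (del_verts G (VA \<union> {b, z1, z2})) y1 x2"
  shows "Gclass 2 3 G' \<and>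
         (real (lam G') \<ge> real (nverts G') / 4 \<longrightarrow> real (lam G) \<ge> real (nverts G) / 4)"
proof -
  define R where "R = VA \<union> {b, z1, z2}"
  define H where "H = del_verts G R"
  have "b \<in> nb G z1" "y1 \<in> nb G z1" using ednb nbs assms(3) by blast+
  then have nz1: "nb G z1 = {b,y1}" using deg2[of z1 b y1] assms(1,4) by auto
  have "x1 \<in> nb G y1" "z1 \<in> nb G y1" using ednb assms(2,3) by blast+
  then have ny1: "nb G y1 = {x1,z1}" using deg2[of y1 x1 z1] assms(1,5) by auto
  have "b \<in> nb G z2" "x2 \<in> nb G z2" using ednb nbs assms(8) by blast+
  then have nz2: "nb G z2 = {b,x2}" using deg2[of z2 b x2] assms(7,9) by auto
  have y1: "y1 \<in> VB" using inVB[of z1 y1] nz1 nbs assms(1) by auto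
  have y1z2: "y1 \<noteq> z2"
  proof
    assume "y1 = z2" then have "{x1,z1} = {b,x2}" using ny1 nz2 by simp
    then show False using assms(1) by (auto simp: doubleton_eq_iff)
  qed
  have y1R: "y1 \<notin> R" using y1 y1z2 assms(1) part unfolding R_def by auto
  have x2: "x2 \<in> VB" using inVB[of z2 x2] nz2 nbs assms(7) by auto
  have x2z1: "x2 \<noteq> z1" using assms(4,10) by auto
  have x2R: "x2 \<notin> R" using x2 x2z1 assms(7) part unfolding R_def by auto
  have y1x2: "y1 \<noteq> x2" using assms(5,10) by auto
  have x1z2: "x1 \<noteq> z2" using assms(6,9) by auto
  have G'H: "G' = add_edge H y1 x2" unfolding G' H_def R_def ..
  have vH: "verts H = verts G - R" unfolding H_def verts_del ..
  have sH: "simple_graph H" unfolding H_def by (rule simple_del[OF sG])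
  have vs: "y1 \<in> verts G" "x2 \<in> verts G" using y1 x2 part by auto
  have s': "simple_graph G'" unfolding G'H
    by (rule simple_add[OF sH y1x2]) (use y1R x2R vs vH in auto)
  have vG': "verts G' = verts G - R" unfolding G'H verts_add vH ..
  have nG': "nb G' w = (nb G w - {z1,z2}) \<union> (if w = y1 then {x2} else {}) \<union> (if w = x2 then {y1} else {})"
    if w: "w \<in> verts G'" for w
  proof -
    have wv: "w \<in> verts G" "w \<notin> VA" "w \<noteq> b" using w vG' unfolding R_def by auto
    have wz: "w \<noteq> z1" "w \<noteq> z2" using w vG' unfolding R_def by auto
    have nVA: "\<forall>y\<in>nb G w. y \<notin> VA" using wfacts[OF wv] by blast
    have wa: "w \<noteq> a" using wfacts[OF wv] by blast
    have bn: "b \<notin> nb G w" using bnb wa wz by simp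
    have "nb H w = nb G w - R" unfolding H_def using nb_del[OF sG] wv wz unfolding R_def by auto
    also have "\<dots> = nb G w - {z1,z2}" using nVA bn unfolding R_def by auto
    finally show ?thesis unfolding G'H nb_add by simp
  qed
  have yv: "y1 \<in> verts G'" "x2 \<in> verts G'" using vG' vs y1R x2R by auto
  have n1: "nb G' y1 = {x1, x2}" using nG'[OF yv(1)] ny1 y1x2 x1z2 assms(1) by auto
  have z1x2: "z1 \<notin> nb G x2" using nb_sym[of z1 G x2] nz1 assms(7) y1x2 by auto
  have z2x2: "z2 \<in> nb G x2" using ednb assms(8) by blast
  have y1x2n: "y1 \<notin> nb G x2" using nb_sym[of y1 G x2] ny1 assms(11) x2z1 by auto
  have n2: "nb G' x2 = insert y1 (nb G x2 - {z2})" using nG'[OF yv(2)] y1x2 z1x2 by auto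
  have c2: "card (nb G' x2) = 3"
  proof -
    have "card (nb G x2 - {z2}) = 2" using card_Diff_singleton[OF z2x2] assms(10) dG by simp
    then show ?thesis unfolding n2 using y1x2n finN by simp
  qed
  have "2 \<le> card (nb G' w) \<and> card (nb G' w) \<le> 3" if w: "w \<in> verts G'" for w
  proof -
    have wv: "w \<in> verts G" "w \<notin> VA" "w \<noteq> b" using w vG' unfolding R_def by auto
    consider "w = y1" | "w = x2" | "w \<noteq> y1" "w \<noteq> x2" by blast
    then show ?thesis
    proof cases
      case 1 then show ?thesis using n1 assms(11) by simp
    next
      case 2 then show ?thesis using c2 by simp
    next
      case 3
      have "z1 \<notin> nb G w" using nb_sym[of z1 G w] nz1 3 wv by auto
      moreover have "z2 \<notin> nb G w" using nb_sym[of z2 G w] nz2 3 wv by auto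
      ultimately have "nb G' w = nb G w" using nG'[OF w] 3 by auto
      then show ?thesis using cardN wv by simp
    qed
  qed
  then have "Gclass 2 3 G'" using gclass_from s' by blast
  moreover have "real (lam G') \<ge> real (nverts G') / 4 \<longrightarrow> real (lam G) \<ge> real (nverts G) / 4"
  proof (rule finish[OF s'])
    show "verts G' \<subseteq> verts G - (VA \<union> {b})" "verts G - (VA \<union> {b} \<union> {z1, z2}) \<subseteq> verts G'"
      using vG' unfolding R_def by auto
    have E: "edges G' \<subseteq> insert {y1,x2} (edges G)" unfolding G' edges_add edges_del by auto
    have rr: "repl G G' {z1,z2} \<and> (\<forall>t\<in>P2s G' - P2s G. y1 \<in> tverts t)"
    proof (rule repl_swap[OF s' E])
      show "{z1, y1} \<in> edges G" using assms(3) by (simp add: insert_commute)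
      show "{z2, x2} \<in> edges G" using assms(8) by (simp add: insert_commute)
      show "z1 \<notin> verts G'" "z2 \<notin> verts G'" using vG' unfolding R_def by auto
    qed
    then show "repl G G' {z1,z2}" by (rule conjunct1)
    from rr show "\<forall>t\<in>P2s G' - P2s G. y1 \<in> tverts t" by (rule conjunct2)
    have zz: "z1 \<notin> verts G'" "z2 \<notin> verts G'" using vG' unfolding R_def by auto
    have zA: "z1 \<notin> VA" "z2 \<notin> VA" using nbs(1,2) part(2) by blast+
    have zb: "z1 \<noteq> b" "z2 \<noteq> b" using assms(1,7) by auto
    show "{z1,z2} \<inter> (verts G' \<union> (VA \<union> {b})) = {}" using zz zA zb by blast
  qed
  ultimately show ?thesis by blast
qed



lemma a22:
  assumes "distinct [x1, y1, z1, b]" "{x1, y1} \<in> edges G" "{y1, z1} \<in> edges G"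
    "deg G z1 = 2" "deg G y1 = 2" "deg G x1 = 3"
    "distinct [x2, z2, b]" "{x2, z2} \<in> edges G" "deg G z2 = 2" "deg G x2 = 3"
    "x1 = x2" and G': "G' = add_edge (del_verts G (VA \<union> {b, z1})) y1 z2"
  shows "Gclass 2 3 G' \<and>
         (real (lam G') \<ge> real (nverts G') / 4 \<longrightarrow> real (lam G) \<ge> real (nverts G) / 4)"
proof -
  define R where "R = VA \<union> {b, z1}"
  define H where "H = del_verts G R"
  have "b \<in> nb G z1" "y1 \<in> nb G z1" using ednb nbs assms(3) by blast+
  then have nz1: "nb G z1 = {b,y1}" using deg2[of z1 b y1] assms(1,4) by auto
  have "x1 \<in> nb G y1" "z1 \<in> nb G y1" using ednb assms(2,3) by blast+
  then have ny1: "nb G y1 = {x1,z1}" using deg2[of y1 x1 z1] assms(1,5) by auto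
  have "b \<in> nb G z2" "x1 \<in> nb G z2" using ednb nbs assms(8,11) by blast+
  then have nz2: "nb G z2 = {b,x1}" using deg2[of z2 b x1] assms(7,9,11) by auto
  have y1: "y1 \<in> VB" using inVB[of z1 y1] nz1 nbs assms(1) by auto
  have y1z2: "y1 \<noteq> z2"
  proof
    assume "y1 = z2" then have "{x1,z1} = {b,x1}" using ny1 nz2 by simp
    then show False using assms(1) by (auto simp: doubleton_eq_iff)
  qed
  have y1R: "y1 \<notin> R" using y1 assms(1) part unfolding R_def by auto
  have z2R: "z2 \<notin> R" using nbs assms(7) part unfolding R_def by auto
  have x1z2: "x1 \<noteq> z2" using assms(6,9) by auto
  have G'H: "G' = add_edge H y1 z2" unfolding G' H_def R_def ..
  have vH: "verts H = verts G - R" unfolding H_def verts_del ..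
  have sH: "simple_graph H" unfolding H_def by (rule simple_del[OF sG])
  have vs: "y1 \<in> verts G" "z2 \<in> verts G" using y1 nbs part by auto
  have s': "simple_graph G'" unfolding G'H
    by (rule simple_add[OF sH y1z2]) (use y1R z2R vs vH in auto)
  have vG': "verts G' = verts G - R" unfolding G'H verts_add vH ..
  have nG': "nb G' w = (nb G w - {b,z1}) \<union> (if w = y1 then {z2} else {}) \<union> (if w = z2 then {y1} else {})"
    if w: "w \<in> verts G'" for w
  proof -
    have wv: "w \<in> verts G" "w \<notin> VA" "w \<noteq> b" using w vG' unfolding R_def by auto
    have wz: "w \<noteq> z1" using w vG' unfolding R_def by auto
    have nVA: "\<forall>y\<in>nb G w. y \<notin> VA" using wfacts[OF wv] by blast
    have "nb H w = nb G w - R" unfolding H_def using nb_del[OF sG] wv wz unfolding R_def by auto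
    also have "\<dots> = nb G w - {b,z1}" using nVA unfolding R_def by auto
    finally show ?thesis unfolding G'H nb_add by simp
  qed
  have yv: "y1 \<in> verts G'" "z2 \<in> verts G'" using vG' vs y1R z2R by auto
  have n1: "nb G' y1 = {x1, z2}" using nG'[OF yv(1)] ny1 y1z2 assms(1) by auto
  have n2: "nb G' z2 = {x1, y1}" using nG'[OF yv(2)] nz2 y1z2 assms(1) by auto
  have "2 \<le> card (nb G' w) \<and> card (nb G' w) \<le> 3" if w: "w \<in> verts G'" for w
  proof -
    have wv: "w \<in> verts G" "w \<notin> VA" "w \<noteq> b" using w vG' unfolding R_def by auto
    have wz: "w \<noteq> z1" using w vG' unfolding R_def by auto
    have wa: "w \<noteq> a" using wfacts[OF wv] by blast
    consider "w = y1" | "w = z2" | "w \<noteq> y1" "w \<noteq> z2" by blast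
    then show ?thesis
    proof cases
      case 1 then show ?thesis using n1 x1z2 by simp
    next
      case 2 then show ?thesis using n2 assms(1) by simp
    next
      case 3
      have "b \<notin> nb G w" using bnb wa wz 3 by simp
      moreover have "z1 \<notin> nb G w" using nb_sym[of z1 G w] nz1 3 wv by auto
      ultimately have "nb G' w = nb G w" using nG'[OF w] 3 by auto
      then show ?thesis using cardN wv by simp
    qed
  qed
  then have "Gclass 2 3 G'" using gclass_from s' by blast
  moreover have "real (lam G') \<ge> real (nverts G') / 4 \<longrightarrow> real (lam G) \<ge> real (nverts G) / 4"
  proof (rule finish[OF s'])
    show "verts G' \<subseteq> verts G - (VA \<union> {b})" "verts G - (VA \<union> {b} \<union> {z1, z2}) \<subseteq> verts G'"
      using vG' unfolding R_def by auto
    have E: "edges G' \<subseteq> insert {y1,z2} (edges G)" unfolding G' edges_add edges_del by auto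
    have rr: "repl G G' {} \<and> (\<forall>t\<in>P2s G' - P2s G. y1 \<in> tverts t)"
    proof (rule repl_tri[OF E])
      show "nb G' y1 = {z2, x1}" using n1 by auto
      show "nb G' z2 = {y1, x1}" using n2 by auto
      show "{y1, x1} \<in> edges G" using assms(2) by (simp add: insert_commute)
      show "{x1, z2} \<in> edges G" using assms(8,11) by simp
      show "y1 \<noteq> z2" by (rule y1z2)
    qed
    then show "repl G G' {}" by (rule conjunct1)
    from rr show "\<forall>t\<in>P2s G' - P2s G. y1 \<in> tverts t" by (rule conjunct2)
    show "{} \<inter> (verts G' \<union> (VA \<union> {b})) = {}" by simp
  qed
  ultimately show ?thesis by blast
qed



lemma a3:
  assumes "distinct [x1, y1, z1, b]" "{x1, y1} \<in> edges G" "{y1, z1} \<in> edges G"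
    "deg G z1 = 2" "deg G y1 = 2" "deg G x1 = 3"
    "distinct [x2, y2, z2, b]" "{x2, y2} \<in> edges G" "{y2, z2} \<in> edges G"
    "deg G z2 = 2" "deg G y2 = 2" "deg G x2 = 3"
    and G': "G' = add_edge (del_verts G (VA \<union> {b, z1, z2})) y1 y2"
  shows "Gclass 2 3 G' \<and>
         (real (lam G') \<ge> real (nverts G') / 4 \<longrightarrow> real (lam G) \<ge> real (nverts G) / 4)"
proof -
  define R where "R = VA \<union> {b, z1, z2}"
  define H where "H = del_verts G R"
  have "b \<in> nb G z1" "y1 \<in> nb G z1" using ednb nbs assms(3) by blast+
  then have nz1: "nb G z1 = {b,y1}" using deg2[of z1 b y1] assms(1,4) by auto
  have "x1 \<in> nb G y1" "z1 \<in> nb G y1" using ednb assms(2,3) by blast+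
  then have ny1: "nb G y1 = {x1,z1}" using deg2[of y1 x1 z1] assms(1,5) by auto
  have "b \<in> nb G z2" "y2 \<in> nb G z2" using ednb nbs assms(9) by blast+
  then have nz2: "nb G z2 = {b,y2}" using deg2[of z2 b y2] assms(7,10) by auto
  have "x2 \<in> nb G y2" "z2 \<in> nb G y2" using ednb assms(8,9) by blast+
  then have ny2: "nb G y2 = {x2,z2}" using deg2[of y2 x2 z2] assms(7,11) by auto
  have y1: "y1 \<in> VB" using inVB[of z1 y1] nz1 nbs assms(1) by auto
  have y2: "y2 \<in> VB" using inVB[of z2 y2] nz2 nbs assms(7) by auto
  have y1z2: "y1 \<noteq> z2"
  proof
    assume "y1 = z2" then have "{x1,z1} = {b,y2}" using ny1 nz2 by simp
    then show False using assms(1) by (auto simp: doubleton_eq_iff)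
  qed
  have y2z1: "y2 \<noteq> z1"
  proof
    assume "y2 = z1" then have "{x2,z2} = {b,y1}" using ny2 nz1 by simp
    then show False using assms(7) by (auto simp: doubleton_eq_iff)
  qed
  have z1x2: "z1 \<noteq> x2" using assms(4,12) by auto
  have y1y2: "y1 \<noteq> y2"
  proof
    assume "y1 = y2" then have "{x1,z1} = {x2,z2}" using ny1 ny2 by simp
    then show False using nbs(3) z1x2 by (auto simp: doubleton_eq_iff)
  qed
  have y1R: "y1 \<notin> R" using y1 y1z2 assms(1) part unfolding R_def by auto
  have y2R: "y2 \<notin> R" using y2 y2z1 assms(7) part unfolding R_def by auto
  have x1z2: "x1 \<noteq> z2" using assms(6,10) by auto
  have x2z1: "x2 \<noteq> z1" using assms(4,12) by auto
  have x1y2: "x1 \<noteq> y2" using assms(6,11) by auto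
  have x2y1: "x2 \<noteq> y1" using assms(5,12) by auto
  have G'H: "G' = add_edge H y1 y2" unfolding G' H_def R_def ..
  have vH: "verts H = verts G - R" unfolding H_def verts_del ..
  have sH: "simple_graph H" unfolding H_def by (rule simple_del[OF sG])
  have vs: "y1 \<in> verts G" "y2 \<in> verts G" using y1 y2 part by auto
  have s': "simple_graph G'" unfolding G'H
    by (rule simple_add[OF sH y1y2]) (use y1R y2R vs vH in auto)
  have vG': "verts G' = verts G - R" unfolding G'H verts_add vH ..
  have nG': "nb G' w = (nb G w - {z1,z2}) \<union> (if w = y1 then {y2} else {}) \<union> (if w = y2 then {y1} else {})"
    if w: "w \<in> verts G'" for w
  proof -
    have wv: "w \<in> verts G" "w \<notin> VA" "w \<noteq> b" using w vG' unfolding R_def by auto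
    have wz: "w \<noteq> z1" "w \<noteq> z2" using w vG' unfolding R_def by auto
    have nVA: "\<forall>y\<in>nb G w. y \<notin> VA" using wfacts[OF wv] by blast
    have wa: "w \<noteq> a" using wfacts[OF wv] by blast
    have bn: "b \<notin> nb G w" using bnb wa wz by simp
    have "nb H w = nb G w - R" unfolding H_def using nb_del[OF sG] wv wz unfolding R_def by auto
    also have "\<dots> = nb G w - {z1,z2}" using nVA bn unfolding R_def by auto
    finally show ?thesis unfolding G'H nb_add by simp
  qed
  have yv: "y1 \<in> verts G'" "y2 \<in> verts G'" using vG' vs y1R y2R by auto
  have n1: "nb G' y1 = {x1, y2}" using nG'[OF yv(1)] ny1 y1y2 x1z2 assms(1) by auto
  have n2: "nb G' y2 = {x2, y1}" using nG'[OF yv(2)] ny2 y1y2 x2z1 assms(7) by auto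
  have "2 \<le> card (nb G' w) \<and> card (nb G' w) \<le> 3" if w: "w \<in> verts G'" for w
  proof -
    have wv: "w \<in> verts G" "w \<notin> VA" "w \<noteq> b" using w vG' unfolding R_def by auto
    consider "w = y1" | "w = y2" | "w \<noteq> y1" "w \<noteq> y2" by blast
    then show ?thesis
    proof cases
      case 1 then show ?thesis using n1 x1y2 by simp
    next
      case 2 then show ?thesis using n2 x2y1 by simp
    next
      case 3
      have "z1 \<notin> nb G w" using nb_sym[of z1 G w] nz1 3 wv by auto
      moreover have "z2 \<notin> nb G w" using nb_sym[of z2 G w] nz2 3 wv by auto
      ultimately have "nb G' w = nb G w" using nG'[OF w] 3 by auto
      then show ?thesis using cardN wv by simp
    qed
  qed
  then have "Gclass 2 3 G'" using gclass_from s' by blast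
  moreover have "real (lam G') \<ge> real (nverts G') / 4 \<longrightarrow> real (lam G) \<ge> real (nverts G) / 4"
  proof (rule finish[OF s'])
    show "verts G' \<subseteq> verts G - (VA \<union> {b})" "verts G - (VA \<union> {b} \<union> {z1, z2}) \<subseteq> verts G'"
      using vG' unfolding R_def by auto
    have E: "edges G' \<subseteq> insert {y1,y2} (edges G)" unfolding G' edges_add edges_del by auto
    have rr: "repl G G' {z1,z2} \<and> (\<forall>t\<in>P2s G' - P2s G. y1 \<in> tverts t)"
    proof (rule repl_swap[OF s' E])
      show "{z1, y1} \<in> edges G" using assms(3) by (simp add: insert_commute)
      show "{z2, y2} \<in> edges G" using assms(9) by (simp add: insert_commute)
      show "z1 \<notin> verts G'" "z2 \<notin> verts G'" using vG' unfolding R_def by auto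
    qed
    then show "repl G G' {z1,z2}" by (rule conjunct1)
    from rr show "\<forall>t\<in>P2s G' - P2s G. y1 \<in> tverts t" by (rule conjunct2)
    have zz: "z1 \<notin> verts G'" "z2 \<notin> verts G'" using vG' unfolding R_def by auto
    have zA: "z1 \<notin> VA" "z2 \<notin> VA" using nbs(1,2) part(2) by blast+
    have zb: "z1 \<noteq> b" "z2 \<noteq> b" using assms(1,7) by auto
    show "{z1,z2} \<inter> (verts G' \<union> (VA \<union> {b})) = {}" using zz zA zb by blast
  qed
  ultimately show ?thesis by blast
qed


end

theorem lemma3p4:
  fixes G G' :: "'a graph" and VA VB :: "'a set" and a b z1 z2 x1 x2 y1 y2 :: 'a
  assumes G: "Gclass 2 3 G"
    and ab: "{a, b} \<in> edges G" and da: "deg G a = 3" and db: "deg G b = 3"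
    and part: "verts G = VA \<union> VB" "VA \<inter> VB = {}" "a \<in> VA" "b \<in> VB"
    and cross: "\<forall>e\<in>edges G - {{a, b}}. e \<subseteq> VA \<or> e \<subseteq> VB"
    and vA: "nverts (induced G (VA \<union> {b})) = 6"
    and lA: "lam (induced G (VA \<union> {b})) = 2"
    and nb: "z1 \<in> VB" "z2 \<in> VB" "z1 \<noteq> z2" "{b, z1} \<in> edges G" "{b, z2} \<in> edges G"
    and cases:
      "(\<comment> \<open>(a1.1)\<close>
          distinct [x1, z1, b] \<and> {x1, z1} \<in> edges G \<and> deg G z1 = 2 \<and> deg G x1 = 3 \<and>
          distinct [x2, z2, b] \<and> {x2, z2} \<in> edges G \<and> deg G z2 = 2 \<and> deg G x2 = 3 \<and>
          x1 \<noteq> x2 \<and> G' = del_verts G (VA \<union> {b, z1, z2}))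
     \<or> (\<comment> \<open>(a1.2)\<close>
          distinct [x1, z1, b] \<and> {x1, z1} \<in> edges G \<and> deg G z1 = 2 \<and> deg G x1 = 3 \<and>
          distinct [x2, z2, b] \<and> {x2, z2} \<in> edges G \<and> deg G z2 = 2 \<and> deg G x2 = 3 \<and>
          x1 = x2 \<and> G' = add_edge (del_verts G (VA \<union> {b})) z1 z2)
     \<or> (\<comment> \<open>(a2.1)\<close>
          distinct [x1, y1, z1, b] \<and> {x1, y1} \<in> edges G \<and> {y1, z1} \<in> edges G \<and>
          deg G z1 = 2 \<and> deg G y1 = 2 \<and> deg G x1 = 3 \<and>
          distinct [x2, z2, b] \<and> {x2, z2} \<in> edges G \<and> deg G z2 = 2 \<and> deg G x2 = 3 \<and>
          x1 \<noteq> x2 \<and> G' = add_edge (del_verts G (VA \<union> {b, z1, z2})) y1 x2)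
     \<or> (\<comment> \<open>(a2.2)\<close>
          distinct [x1, y1, z1, b] \<and> {x1, y1} \<in> edges G \<and> {y1, z1} \<in> edges G \<and>
          deg G z1 = 2 \<and> deg G y1 = 2 \<and> deg G x1 = 3 \<and>
          distinct [x2, z2, b] \<and> {x2, z2} \<in> edges G \<and> deg G z2 = 2 \<and> deg G x2 = 3 \<and>
          x1 = x2 \<and> G' = add_edge (del_verts G (VA \<union> {b, z1})) y1 z2)
     \<or> (\<comment> \<open>(a3)\<close>
          distinct [x1, y1, z1, b] \<and> {x1, y1} \<in> edges G \<and> {y1, z1} \<in> edges G \<and>
          deg G z1 = 2 \<and> deg G y1 = 2 \<and> deg G x1 = 3 \<and>
          distinct [x2, y2, z2, b] \<and> {x2, y2} \<in> edges G \<and> {y2, z2} \<in> edges G \<and>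
          deg G z2 = 2 \<and> deg G y2 = 2 \<and> deg G x2 = 3 \<and>
          G' = add_edge (del_verts G (VA \<union> {b, z1, z2})) y1 y2)"
  shows "Gclass 2 3 G' \<and>
         (real (lam G') \<ge> real (nverts G') / 4 \<longrightarrow> real (lam G) \<ge> real (nverts G) / 4)"
  proof -
  interpret L G VA VB a b z1 z2
    by unfold_locales (use G ab da db part cross vA lA nb in auto)
  show ?thesis using cases
    apply (elim disjE conjE)
        apply (rule a11; assumption)
       apply (rule a12; assumption)
      apply (rule a21; assumption)
     apply (rule a22; assumption)
    apply (rule a3; assumption)
    done
qed

end
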